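(* Let $d=2$ or $d=3$, let $\Omega=(0,1)^d$, and let $\boldsymbol{\varphi}^{\rm hf}_1,\dots,\boldsymbol{\varphi}^{\rm hf}_{M_{\rm hf}}\in C^1(\mathbb{R}^d;\mathbb{R}^d)$ satisfy $$\boldsymbol{\varphi}^{\rm hf}_m(\mathbf{X})\cdot\mathbf{e}_i=0\quad\text{on }\{\mathbf{X}:\ X_i=0\text{ or }X_i=1\},\qquad m=1,\dots,M_{\rm hf},\ i=1,\dots,d.$$ For $\mathbf{a}\in\mathbb{R}^{M_{\rm hf}}$ define $\boldsymbol{\Psi}^{\rm hf}_{\mathbf{a}}(\mathbf{X})=\mathbf{X}+\sum_{m=1}^{M_{\rm hf}}a_m\boldsymbol{\varphi}^{\rm hf}_m(\mathbf{X})$ and $\mathfrak{J}^{\rm hf}_{\mathbf{a}}=\det(\widehat{\nabla}\boldsymbol{\Psi}^{\rm hf}_{\mathbf{a}})$. Then, for any $\bar{\mathbf{a}}\in\mathbb{R}^{M_{\rm hf}}$, $\boldsymbol{\Phi}=\boldsymbol{\Psi}^{\rm hf}_{\bar{\mathbf{a}}}$ is bijective from $\Omega=(0,1)^d$ into itself if $$\min_{\mathbf{X}\in\overline{\Omega}}\det\big(\widehat{\nabla}\boldsymbol{\Phi}(\mathbf{X})\big)>0.$$ Furthermore, for any $\epsilon\in(0,1)$ there exists a ball $B=\mathcal{B}_{r_\epsilon}(\mathbf{0})\subset\mathbb{R}^{M_{\rm hf}}$ of radius $r_\epsilon>0$ centered at $\mathbf{0}$ such that $\inf_{\mathbf{X}\in\Omega,\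 \mathbf{a}\in B}\mathfrak{J}^{\rm hf}_{\mathbf{a}}(\mathbf{X})\ge\epsilon$.
   Context: $\mathbf{e}_1,\dots,\mathbf{e}_d$ is the canonical basis of $\mathbb{R}^d$; $\widehat{\nabla}$ denotes the gradient (Jacobian) with respect to $\mathbf{X}$. *)

theory Defs
  imports "HOL-Analysis.Analysis"
begin

definition C1_map :: "(real^'n \<Rightarrow> real^'n) \<Rightarrow> bool" where
  "C1_map f \<longleftrightarrow> (\<exists>f'. (\<forall>x. (f has_derivative blinfun_apply (f' x)) (at x)) \<and> continuous_on UNIV f')"

definition unit_cube :: "(real^'n) set" where
  "unit_cube = {X. \<forall>i. 0 < X $ i \<and> X $ i < 1}"

definition jac :: "(real^'n \<Rightarrow> real^'n) \<Rightarrow> real^'n \<Rightarrow> real^'n^'n" where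
  "jac f X = matrix (frechet_derivative f (at X))"

definition Psi_hf :: "nat \<Rightarrow> (nat \<Rightarrow> real^'n \<Rightarrow> real^'n) \<Rightarrow> (nat \<Rightarrow> real) \<Rightarrow> real^'n \<Rightarrow> real^'n" where
  "Psi_hf M \<phi> a X = X + (\<Sum>m=1..M. a m *\<^sub>R \<phi> m X)"

definition J_hf :: "nat \<Rightarrow> (nat \<Rightarrow> real^'n \<Rightarrow> real^'n) \<Rightarrow> (nat \<Rightarrow> real) \<Rightarrow> real^'n \<Rightarrow> real" where
  "J_hf M \<phi> a X = det (jac (Psi_hf M \<phi> a) X)"

definition coef_norm :: "nat \<Rightarrow> (nat \<Rightarrow> real) \<Rightarrow> real" where
  "coef_norm M a = sqrt (\<Sum>m=1..M. (a m)^2)"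

end

theory Submission
  imports Defs
begin

locale cube_map =
  fixes f :: "real^'n \<Rightarrow> real^'n" and f' :: "real^'n \<Rightarrow> ((real^'n) \<Rightarrow>\<^sub>L (real^'n))"
  assumes deriv: "\<And>x. (f has_derivative blinfun_apply (f' x)) (at x)"
  and contf': "continuous_on UNIV f'"
  and bd0: "\<And>x i. x$i = 0 \<Longrightarrow> f x $ i = 0"
  and bd1: "\<And>x i. x$i = 1 \<Longrightarrow> f x $ i = 1"
begin

definition D :: "'n \<Rightarrow> 'n \<Rightarrow> real^'n \<Rightarrow> real" where
  "D k l x = f' x (axis l 1) $ k"

lemma contD: "continuous_on UNIV (D k l)"
  unfolding D_def
  by (intro continuous_on_component bounded_linear.continuous_on[OF blinfun.bounded_linear_left contf'])

lemma contf: "continuous_on S f"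
  by (meson deriv has_derivative_continuous continuous_at_imp_continuous_on)

lemma line_deriv:
  "((\<lambda>t. f (y + t *\<^sub>R v) $ k) has_real_derivative (f' (y + t *\<^sub>R v) v $ k)) (at t)"
proof -
  have "((\<lambda>t. y + t *\<^sub>R v) has_derivative (\<lambda>s. s *\<^sub>R v)) (at t)"
    by (auto intro!: derivative_eq_intros)
  from has_derivative_compose[OF this deriv]
  have "((\<lambda>t. f (y + t *\<^sub>R v)) has_derivative (\<lambda>s. f' (y + t *\<^sub>R v) (s *\<^sub>R v))) (at t)"
    by (simp add: o_def)
  note d = bounded_linear.has_derivative[OF bounded_linear_vec_nth this, of k]
  have eq: "(\<lambda>x::real. x * c) = (*) c" for c by (auto simp: fun_eq_iff)
  show ?thesis using d unfolding has_field_derivative_def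
    by (simp add: blinfun.scaleR_right eq)
qed

lemma partial_zero:
  assumes hyp: "\<And>z. z$k = c \<Longrightarrow> f z $ k = c" and "x$k = c" and "l \<noteq> k"
  shows "D k l x = 0"
proof -
  have "((\<lambda>t. f (x + t *\<^sub>R axis l 1) $ k) has_real_derivative D k l x) (at 0)"
    using line_deriv[where y=x and t=0 and v="axis l 1" and k=k] by (simp add: D_def)
  moreover have "((\<lambda>t. f (x + t *\<^sub>R axis l 1) $ k) has_real_derivative 0) (at 0)"
  proof -
    have "(\<lambda>t. f (x + t *\<^sub>R axis l 1) $ k) = (\<lambda>t. c)"
      using assms by (auto intro!: hyp simp: axis_def)
    then show ?thesis by simp
  qed
  ultimately show ?thesis using DERIV_unique by blast
qed

end

locale cube_map_nz = cube_map f f' for f :: "real^'n \<Rightarrow> real^'n" and f' +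
  assumes nz: "\<And>x. x \<in> {x. \<forall>i. 0 \<le> x$i \<and> x$i \<le> 1} \<Longrightarrow> det (matrix (blinfun_apply (f' x))) \<noteq> 0"
begin

definition K :: "(real^'n) set" where "K = {x. \<forall>i. 0 \<le> x$i \<and> x$i \<le> 1}"

lemma matrix_entry: "matrix (blinfun_apply (f' x)) $ k $ l = D k l x"
  by (simp add: matrix_def D_def)

lemma Djj_face:
  assumes "x \<in> K" "x$j = 0 \<or> x$j = 1"
  shows "D j j x \<noteq> 0"
proof
  assume h: "D j j x = 0"
  have "D j l x = 0" for l
  proof (cases "l = j")
    case True then show ?thesis using h by simp
  next
    case False
    show ?thesis using assms(2)
    proof
      assume "x$j = 0" then show ?thesis using partial_zero[of j 0 x l] bd0 False by blast
    next
      assume "x$j = 1" then show ?thesis using partial_zero[of j 1 x l] bd1 False by blast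
    qed
  qed
  then have "row j (matrix (blinfun_apply (f' x))) = 0"
    by (simp add: row_def vec_eq_iff matrix_entry)
  then show False using nz[of x] assms(1) det_zero_row(1) unfolding K_def by blast
qed

lemma Djj_seg:
  assumes "0 \<le> t" "t \<le> 1"
  shows "D j j (t *\<^sub>R axis j 1) \<noteq> 0"
proof
  assume h: "D j j (t *\<^sub>R axis j 1) = 0"
  have "D k j (t *\<^sub>R axis j 1) = 0" for k
  proof (cases "k = j")
    case True then show ?thesis using h by simp
  next
    case False
    then show ?thesis using partial_zero[of k 0 "t *\<^sub>R axis j 1" j] bd0 by (simp add: axis_def)
  qed
  then have "column j (matrix (blinfun_apply (f' (t *\<^sub>R axis j 1)))) = 0"
    by (simp add: column_def vec_eq_iff matrix_entry)
  moreover have "t *\<^sub>R axis j 1 \<in> K" using assms by (auto simp: K_def axis_def)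
  ultimately show False using nz det_zero_column(1) unfolding K_def by blast
qed

lemma Djj_pos_some: "\<exists>t. 0 \<le> t \<and> t \<le> 1 \<and> D j j (t *\<^sub>R axis j 1) > 0"
proof -
  have "\<exists>z>0. z < 1 \<and> f (0 + 1 *\<^sub>R axis j 1) $ j - f (0 + 0 *\<^sub>R axis j 1) $ j
      = (1 - 0) * (f' (0 + z *\<^sub>R axis j 1) (axis j 1) $ j)"
    by (rule MVT2) (use line_deriv[where y=0 and v="axis j 1" and k=j] in simp_all)
  then obtain z where z: "0 < z" "z < 1" "f (axis j 1) $ j - f 0 $ j = D j j (z *\<^sub>R axis j 1)"
    by (auto simp: D_def)
  have "f (axis j 1) $ j = 1" by (rule bd1) (simp add: axis_def)
  moreover have "f 0 $ j = 0" by (rule bd0) simp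
  ultimately show ?thesis using z by (intro exI[of _ z]) auto
qed

lemma Djj_pos:
  assumes "x \<in> K" "x$j = 0 \<or> x$j = 1"
  shows "D j j x > 0"
proof (rule ccontr)
  assume "\<not> D j j x > 0"
  with Djj_face[OF assms] have neg: "D j j x < 0" by linarith
  define F0 where "F0 = cbox (0::real^'n) (\<chi> i. if i = j then 0 else 1)"
  define F1 where "F1 = cbox (axis j 1::real^'n) (\<chi> i. 1)"
  define S where "S = (\<lambda>t. t *\<^sub>R axis j (1::real)) ` {0..1}"
  define A where "A = (F0 \<union> S) \<union> F1"
  have "0 \<in> F0" "0 \<in> S" unfolding F0_def S_def by (auto simp: mem_box_cart intro!: image_eqI[of _ _ 0])
  moreover have "axis j 1 \<in> S" "axis j 1 \<in> F1" unfolding F1_def S_def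
    by (auto simp: mem_box_cart axis_def intro!: image_eqI[of _ _ 1])
  ultimately have conA: "connected A" unfolding A_def F0_def F1_def S_def
    by (intro connected_Un connected_continuous_image is_interval_connected is_interval_cbox)
       (auto intro!: continuous_intros)
  have xA: "x \<in> A" using assms unfolding A_def F0_def F1_def K_def
    by (auto simp: mem_box_cart axis_def)
  obtain t where t: "0 \<le> t" "t \<le> 1" "D j j (t *\<^sub>R axis j 1) > 0" using Djj_pos_some by blast
  have tA: "t *\<^sub>R axis j 1 \<in> A" unfolding A_def S_def using t by auto
  have "connected (D j j ` A)"
    by (rule connected_continuous_image[OF continuous_on_subset[OF contD] conA]) simp
  then have "{D j j x .. D j j (t *\<^sub>R axis j 1)} \<subseteq> D j j ` A"
    using xA tA by (intro connected_contains_Icc) auto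
  then have "0 \<in> D j j ` A" using neg t by auto
  then obtain z where z: "z \<in> A" "D j j z = 0" by auto
  show False
  proof (cases "z \<in> S")
    case True then show ?thesis using z Djj_seg unfolding S_def by auto
  next
    case False
    then have "z \<in> F0 \<or> z \<in> F1" using z(1) unfolding A_def by blast
    then have "z \<in> K \<and> (z$j = 0 \<or> z$j = 1)"
    proof
      assume "z \<in> F0"
      then have h: "\<And>i. 0 \<le> z$i \<and> z$i \<le> (if i = j then 0 else 1)"
        unfolding F0_def mem_box_cart by simp
      have "z$j = 0" using h[of j] by simp
      moreover have "z \<in> K" unfolding K_def using h by (smt (verit) mem_Collect_eq)
      ultimately show ?thesis by blast
    next
      assume "z \<in> F1"
      then have h: "\<And>i. (if i = j then 1 else 0) \<le> z$i \<and> z$i \<le> 1"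
        unfolding F1_def mem_box_cart by (simp add: axis_def)
      have "z$j = 1" using h[of j] by simp
      moreover have "z \<in> K" unfolding K_def using h by (smt (verit) mem_Collect_eq)
      ultimately show ?thesis by blast
    qed
    then show ?thesis using z Djj_face by blast
  qed
qed

lemma sign_near:
  assumes "x \<in> K" "x$j = c" "c = 0 \<or> c = 1"
  shows "\<exists>\<delta>>0. \<forall>y\<in>ball x \<delta>. (y$j < c \<longrightarrow> f y $ j < c) \<and> (c < y$j \<longrightarrow> c < f y $ j)"
proof -
  have hyp: "\<And>z. z$j = c \<Longrightarrow> f z $ j = c" using assms(3) by (elim disjE) (simp_all add: bd0 bd1)
  have "D j j x > 0" using Djj_pos[OF assms(1)] assms(2,3) by auto
  moreover have "open (D j j -` {0<..})"
    using contD[of j j] by (simp add: continuous_on_open_vimage)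
  ultimately obtain \<delta> where \<delta>: "\<delta> > 0" "ball x \<delta> \<subseteq> D j j -` {0<..}"
    by (meson greaterThan_iff open_contains_ball_eq vimageI2)
  show ?thesis
  proof (intro exI[of _ \<delta>] conjI ballI impI)
    show "\<delta> > 0" by fact
    fix y assume y: "y \<in> ball x \<delta>"
    define y' where "y' = y - (y$j) *\<^sub>R axis j 1"
    have y'j: "y'$j = 0" by (simp add: y'_def axis_def)
    have yy: "y' + (y$j) *\<^sub>R axis j 1 = y" by (simp add: y'_def)
    have hc: "f (y' + c *\<^sub>R axis j 1) $ j = c" by (rule hyp) (simp add: y'j axis_def)
    have inball: "y' + t *\<^sub>R axis j 1 \<in> ball x \<delta>" if "min c (y$j) \<le> t" "t \<le> max c (y$j)" for t
    proof -
      have "norm ((y' + t *\<^sub>R axis j 1 - x) $ i) \<le> norm ((y - x) $ i)" for i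
        using that assms(2) by (cases "i = j") (auto simp: y'_def axis_def)
      then have "norm (y' + t *\<^sub>R axis j 1 - x) \<le> norm (y - x)"
        by (rule norm_le_componentwise_cart)
      then show ?thesis using y by (simp add: dist_norm norm_minus_commute)
    qed
    have der: "\<exists>d. ((\<lambda>t. f (y' + t *\<^sub>R axis j 1) $ j) has_real_derivative d) (at t) \<and> 0 < d"
      if "min c (y$j) \<le> t" "t \<le> max c (y$j)" for t
    proof -
      have "y' + t *\<^sub>R axis j 1 \<in> ball x \<delta>" by (rule inball[OF that])
      then have "D j j (y' + t *\<^sub>R axis j 1) > 0" using \<delta>(2) by blast
      then show ?thesis using line_deriv[where y=y' and v="axis j 1" and k=j and t=t]
        unfolding D_def by blast
    qed
    {
      assume "y$j < c"
      have "f (y' + (y$j) *\<^sub>R axis j 1) $ j < f (y' + c *\<^sub>R axis j 1) $ j"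
      proof (rule DERIV_pos_imp_increasing[where f="\<lambda>t. f (y' + t *\<^sub>R axis j 1) $ j", OF \<open>y$j < c\<close>])
        fix t assume "y$j \<le> t" "t \<le> c"
        then show "\<exists>d. ((\<lambda>t. f (y' + t *\<^sub>R axis j 1) $ j) has_real_derivative d) (at t) \<and> 0 < d"
          using \<open>y$j < c\<close> by (intro der) auto
      qed
      then show "f y $ j < c" using hc yy by simp
    }
    {
      assume "c < y$j"
      have "f (y' + c *\<^sub>R axis j 1) $ j < f (y' + (y$j) *\<^sub>R axis j 1) $ j"
      proof (rule DERIV_pos_imp_increasing[where f="\<lambda>t. f (y' + t *\<^sub>R axis j 1) $ j", OF \<open>c < y$j\<close>])
        fix t assume "c \<le> t" "t \<le> y$j"
        then show "\<exists>d. ((\<lambda>t. f (y' + t *\<^sub>R axis j 1) $ j) has_real_derivative d) (at t) \<and> 0 < d"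
          using \<open>c < y$j\<close> by (intro der) auto
      qed
      then show "c < f y $ j" using hc yy by simp
    }
  qed
qed

lemma loc_inj:
  assumes "x \<in> K"
  shows "\<exists>\<delta>>0. inj_on f (ball x \<delta>)"
proof -
  have lin: "linear (blinfun_apply (f' x))"
    by (simp add: blinfun.bounded_linear_right bounded_linear.linear)
  have "inj (blinfun_apply (f' x))"
    using nz[of x] assms det_nz_iff_inj[OF lin] unfolding K_def by blast
  then obtain g where g: "linear g" "g \<circ> blinfun_apply (f' x) = id"
    using real_vector.linear_injective_left_inverse[OF lin] by blast
  have bg: "bounded_linear g" using g(1) linear_conv_bounded_linear by blast
  have inv: "Blinfun g o\<^sub>L f' x = id_blinfun"
    by (rule blinfun_eqI) (use g bg in \<open>simp add: bounded_linear_Blinfun_apply fun_eq_iff\<close>)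
  obtain U' V h g' where U': "open U'" "x \<in> U'" "homeomorphism U' V f h"
    by (rule inverse_function_theorem[OF open_UNIV deriv contf' UNIV_I inv]) blast
  have "inj_on f U'" using U'(3) unfolding homeomorphism_def by (metis inj_on_inverseI)
  moreover obtain \<delta> where "\<delta> > 0" "ball x \<delta> \<subseteq> U'" using U' open_contains_ball by blast
  ultimately show ?thesis using inj_on_subset by blast
qed

lemma ball_choice:
  fixes x :: "real^'n"
  assumes "\<And>j::'n. \<exists>d>0. \<forall>z\<in>ball x d. P j z"
  shows "\<exists>d>0. \<forall>z\<in>ball x d. \<forall>j. P j z"
proof -
  obtain d where d: "\<And>j. d j > 0 \<and> (\<forall>z\<in>ball x (d j). P j z)" using assms by metis
  define m where "m = Min (range d)"
  have "m \<in> range d" unfolding m_def by (intro Min_in) auto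
  then have "m > 0" using d by auto
  moreover have "m \<le> d j" for j unfolding m_def by (intro Min_le) auto
  ultimately show ?thesis
  proof (intro exI[of _ m] conjI ballI allI)
    fix z j assume "z \<in> ball x m"
    then have "z \<in> ball x (d j)" using \<open>m \<le> d j\<close> by auto
    then show "P j z" using d by blast
  qed
qed

lemma LL:
  assumes "x \<in> K"
  shows "\<exists>e>0. \<forall>y. dist y (f x) < e \<and> (\<forall>j. x$j = 0 \<longrightarrow> 0 \<le> y$j) \<and> (\<forall>j. x$j = 1 \<longrightarrow> y$j \<le> 1)
           \<longrightarrow> y \<in> f ` K"
proof -
  define Q where "Q j z \<longleftrightarrow> (x$j = 0 \<longrightarrow> 0 \<le> f z $ j \<longrightarrow> 0 \<le> z$j) \<and> (x$j = 1 \<longrightarrow> f z $ j \<le> 1 \<longrightarrow> z$j \<le> 1)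
     \<and> (x$j \<noteq> 0 \<longrightarrow> 0 \<le> z$j) \<and> (x$j \<noteq> 1 \<longrightarrow> z$j \<le> 1)" for j z
  have QQ: "\<exists>d>0. \<forall>z\<in>ball x d. Q j z" for j
  proof -
    have xj: "0 \<le> x$j" "x$j \<le> 1" using assms unfolding K_def by auto
    have comp: "\<bar>z$j - x$j\<bar> < d" if "z \<in> ball x d" for z d
    proof -
      have "\<bar>z$j - x$j\<bar> = \<bar>(z - x)$j\<bar>" by simp
      also have "\<dots> \<le> norm (z - x)" by (rule component_le_norm_cart)
      finally show ?thesis using that by (simp add: dist_norm norm_minus_commute)
    qed
    consider "x$j = 0" | "x$j = 1" | "0 < x$j" "x$j < 1" using xj by linarith
    then show ?thesis
    proof cases
      case 1
      obtain d where d: "d > 0" "\<forall>y\<in>ball x d. (y$j < 0 \<longrightarrow> f y $ j < 0) \<and> (0 < y$j \<longrightarrow> 0 < f y $ j)"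
        using sign_near[OF assms 1] by auto
      show ?thesis
      proof (intro exI[of _ "min d 1"] conjI ballI; (unfold Q_def)?; (intro conjI)?)
        fix z assume z: "z \<in> ball x (min d 1)"
        then have "z \<in> ball x d" by auto
        then show "x$j = 0 \<longrightarrow> 0 \<le> f z $ j \<longrightarrow> 0 \<le> z$j" using d(2) by (meson linorder_not_le)
        show "x$j \<noteq> 1 \<longrightarrow> z$j \<le> 1" using comp[OF z] 1 by auto
      qed (use d 1 in auto)
    next
      case 2
      obtain d where d: "d > 0" "\<forall>y\<in>ball x d. (y$j < 1 \<longrightarrow> f y $ j < 1) \<and> (1 < y$j \<longrightarrow> 1 < f y $ j)"
        using sign_near[OF assms 2] by auto
      show ?thesis
      proof (intro exI[of _ "min d 1"] conjI ballI; (unfold Q_def)?; (intro conjI)?)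
        fix z assume z: "z \<in> ball x (min d 1)"
        then have "z \<in> ball x d" by auto
        then show "x$j = 1 \<longrightarrow> f z $ j \<le> 1 \<longrightarrow> z$j \<le> 1" using d(2) by (meson linorder_not_le)
        show "x$j \<noteq> 0 \<longrightarrow> 0 \<le> z$j" using comp[OF z] 2 by auto
      qed (use d 2 in auto)
    next
      case 3
      show ?thesis
      proof (intro exI[of _ "min (x$j) (1 - x$j)"] conjI ballI; (unfold Q_def)?; (intro conjI)?)
        fix z assume z: "z \<in> ball x (min (x$j) (1 - x$j))"
        show "x$j \<noteq> 0 \<longrightarrow> 0 \<le> z$j" "x$j \<noteq> 1 \<longrightarrow> z$j \<le> 1" using comp[OF z] by auto
      qed (use 3 in auto)
    qed
  qed
  from ball_choice[where P=Q, OF QQ] obtain d where d: "d > 0" "\<forall>z\<in>ball x d. \<forall>j. Q j z"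
    by blast
  obtain d0 where d0: "d0 > 0" "inj_on f (ball x d0)" using loc_inj[OF assms] by blast
  define \<delta> where "\<delta> = min d d0"
  have "open (f ` ball x \<delta>)"
    by (rule invariance_of_domain[OF contf open_ball]) (use d0 in \<open>auto simp: \<delta>_def intro: inj_on_subset\<close>)
  moreover have "f x \<in> f ` ball x \<delta>" using d d0 by (simp add: \<delta>_def)
  ultimately obtain e where e: "e > 0" "ball (f x) e \<subseteq> f ` ball x \<delta>"
    using open_contains_ball by blast
  show ?thesis
  proof (intro exI[of _ e] conjI allI impI)
    show "e > 0" by fact
    fix y assume y: "dist y (f x) < e \<and> (\<forall>j. x$j = 0 \<longrightarrow> 0 \<le> y$j) \<and> (\<forall>j. x$j = 1 \<longrightarrow> y$j \<le> 1)"
    then have "y \<in> f ` ball x \<delta>" using e by (auto simp: dist_commute)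
    then obtain z where z: "z \<in> ball x \<delta>" "y = f z" by auto
    then have zd: "z \<in> ball x d" by (auto simp: \<delta>_def)
    have "z \<in> K" unfolding K_def
    proof (intro CollectI allI)
      fix j
      have "Q j z" using d(2) zd by blast
      then show "0 \<le> z$j \<and> z$j \<le> 1" using y z(2) unfolding Q_def
        by (cases "x$j = 0"; cases "x$j = 1") auto
    qed
    then show "y \<in> f ` K" using z by auto
  qed
qed

definition Qo :: "(real^'n) set" where "Qo = {x. \<forall>i. 0 < x$i \<and> x$i < 1}"

lemma K_cbox: "K = cbox 0 (vec 1)" by (auto simp: K_def mem_box_cart)
lemma Qo_box: "Qo = box 0 (vec 1)" by (auto simp: Qo_def mem_box_cart)
lemma Qo_ne: "Qo \<noteq> {}"
proof -
  have "(\<chi> i. 1/2) \<in> Qo" by (simp add: Qo_def)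
  then show ?thesis by blast
qed
lemma compact_K: "compact K" unfolding K_cbox by simp
lemma open_Qo: "open Qo" unfolding Qo_box by (rule open_box)
lemma connected_Qo: "connected Qo" unfolding Qo_box by (intro is_interval_connected is_interval_box)
lemma interior_K: "interior K = Qo" unfolding K_cbox Qo_box by simp
lemma closure_Qo: "closure Qo = K" using Qo_ne unfolding K_cbox Qo_box by (rule closure_box)
lemma Qo_K: "Qo \<subseteq> K" by (auto simp: Qo_def K_def less_imp_le)
lemma zero_K: "0 \<in> K" by (simp add: K_def)

lemma bdry_out:
  assumes "x \<in> K" "x \<notin> Qo" shows "f x \<notin> Qo"
proof -
  have "\<not>(\<forall>i. 0 < x$i \<and> x$i < 1)" using assms(2) unfolding Qo_def by blast
  then obtain j where j: "\<not>(0 < x$j \<and> x$j < 1)" by blast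
  have "0 \<le> x$j" "x$j \<le> 1" using assms(1) unfolding K_def by auto
  then have "x$j = 0 \<or> x$j = 1" using j by linarith
  then have "f x $ j = 0 \<or> f x $ j = 1" using bd0[of x j] bd1[of x j] by blast
  show ?thesis
  proof
    assume "f x \<in> Qo"
    then have "0 < f x $ j" "f x $ j < 1" unfolding Qo_def by auto
    with \<open>f x $ j = 0 \<or> f x $ j = 1\<close> show False by linarith
  qed
qed

lemma step1_upper:
  assumes "x \<in> K" shows "f x $ i \<le> 1"
proof (rule ccontr)
  assume "\<not> f x $ i \<le> 1"
  obtain xs where xs: "xs \<in> K" "\<And>y. y \<in> K \<Longrightarrow> f y $ i \<le> f xs $ i"
    using continuous_attains_sup[OF compact_K _ continuous_on_component[OF contf]] assms by blast
  have big: "f xs $ i > 1" using xs(2)[OF assms] \<open>\<not> f x $ i \<le> 1\<close> by linarith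
  have xi0: "xs$i \<noteq> 0" using big bd0[of xs i] by auto
  have xi1: "xs$i \<noteq> 1" using big bd1[of xs i] by auto
  obtain e where e: "e > 0" and LLe: "\<And>y. dist y (f xs) < e \<Longrightarrow> (\<forall>j. xs$j = 0 \<longrightarrow> 0 \<le> y$j) \<Longrightarrow>
      (\<forall>j. xs$j = 1 \<longrightarrow> y$j \<le> 1) \<Longrightarrow> y \<in> f ` K"
    using LL[OF xs(1)] by blast
  define y where "y = f xs + (e/2) *\<^sub>R axis i 1"
  have "y \<in> f ` K"
  proof (rule LLe)
    show "dist y (f xs) < e" using e by (simp add: y_def dist_norm norm_axis_1)
    show "\<forall>j. xs$j = 0 \<longrightarrow> 0 \<le> y$j"
    proof (intro allI impI)
      fix j assume h: "xs$j = 0"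
      then have "j \<noteq> i" using xi0 by auto
      then show "0 \<le> y$j" using bd0[OF h] by (simp add: y_def axis_def)
    qed
    show "\<forall>j. xs$j = 1 \<longrightarrow> y$j \<le> 1"
    proof (intro allI impI)
      fix j assume h: "xs$j = 1"
      then have "j \<noteq> i" using xi1 by auto
      then show "y$j \<le> 1" using bd1[OF h] by (simp add: y_def axis_def)
    qed
  qed
  then obtain z where "z \<in> K" "f z = y" by auto
  then have "f z $ i = f xs $ i + e/2" by (simp add: y_def axis_def)
  then show False using xs(2)[OF \<open>z \<in> K\<close>] e by linarith
qed

lemma step1_lower:
  assumes "x \<in> K" shows "0 \<le> f x $ i"
proof (rule ccontr)
  assume "\<not> 0 \<le> f x $ i"
  obtain xs where xs: "xs \<in> K" "\<And>y. y \<in> K \<Longrightarrow> f xs $ i \<le> f y $ i"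
    using continuous_attains_inf[OF compact_K _ continuous_on_component[OF contf]] assms by blast
  have small: "f xs $ i < 0" using xs(2)[OF assms] \<open>\<not> 0 \<le> f x $ i\<close> by linarith
  have xi0: "xs$i \<noteq> 0" using small bd0[of xs i] by auto
  have xi1: "xs$i \<noteq> 1" using small bd1[of xs i] by auto
  obtain e where e: "e > 0" and LLe: "\<And>y. dist y (f xs) < e \<Longrightarrow> (\<forall>j. xs$j = 0 \<longrightarrow> 0 \<le> y$j) \<Longrightarrow>
      (\<forall>j. xs$j = 1 \<longrightarrow> y$j \<le> 1) \<Longrightarrow> y \<in> f ` K"
    using LL[OF xs(1)] by blast
  define y where "y = f xs - (e/2) *\<^sub>R axis i 1"
  have "y \<in> f ` K"
  proof (rule LLe)
    show "dist y (f xs) < e" using e by (simp add: y_def dist_norm norm_axis_1)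
    show "\<forall>j. xs$j = 0 \<longrightarrow> 0 \<le> y$j"
    proof (intro allI impI)
      fix j assume h: "xs$j = 0"
      then have "j \<noteq> i" using xi0 by auto
      then show "0 \<le> y$j" using bd0[OF h] by (simp add: y_def axis_def)
    qed
    show "\<forall>j. xs$j = 1 \<longrightarrow> y$j \<le> 1"
    proof (intro allI impI)
      fix j assume h: "xs$j = 1"
      then have "j \<noteq> i" using xi1 by auto
      then show "y$j \<le> 1" using bd1[OF h] by (simp add: y_def axis_def)
    qed
  qed
  then obtain z where "z \<in> K" "f z = y" by auto
  then have "f z $ i = f xs $ i - e/2" by (simp add: y_def axis_def)
  then show False using xs(2)[OF \<open>z \<in> K\<close>] e by linarith
qed

lemma step1: "f ` K \<subseteq> K"
proof
  fix y assume "y \<in> f ` K"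
  then obtain x where "x \<in> K" "y = f x" by auto
  then show "y \<in> K" using step1_upper step1_lower unfolding K_def by blast
qed

lemma step2: assumes "x \<in> Qo" shows "f x \<in> Qo"
proof -
  have xK: "x \<in> K" using assms Qo_K by blast
  obtain e where e: "e > 0" and LLe: "\<And>y. dist y (f x) < e \<Longrightarrow> (\<forall>j. x$j = 0 \<longrightarrow> 0 \<le> y$j) \<Longrightarrow>
      (\<forall>j. x$j = 1 \<longrightarrow> y$j \<le> 1) \<Longrightarrow> y \<in> f ` K"
    using LL[OF xK] by blast
  have "ball (f x) e \<subseteq> K"
  proof
    fix y assume "y \<in> ball (f x) e"
    moreover have "x$j \<noteq> 0 \<and> x$j \<noteq> 1" for j
    proof -
      have "0 < x$j" "x$j < 1" using assms unfolding Qo_def by auto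
      then show ?thesis by simp
    qed
    ultimately have "y \<in> f ` K" by (intro LLe) (auto simp: dist_commute)
    then show "y \<in> K" using step1 by blast
  qed
  then have "f x \<in> interior K" using interiorI[of "ball (f x) e" "f x" K] e by simp
  then show ?thesis using interior_K by simp
qed

lemma step3: assumes "x \<in> K" "f x = 0" shows "x = 0"
proof (rule ccontr)
  assume "x \<noteq> 0"
  then obtain k where k: "x$k \<noteq> 0" by (auto simp: vec_eq_iff)
  have k1: "x$k \<noteq> 1" using bd1[of x k] assms(2) by auto
  obtain e where e: "e > 0" and LLe: "\<And>y. dist y (f x) < e \<Longrightarrow> (\<forall>j. x$j = 0 \<longrightarrow> 0 \<le> y$j) \<Longrightarrow>
      (\<forall>j. x$j = 1 \<longrightarrow> y$j \<le> 1) \<Longrightarrow> y \<in> f ` K"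
    using LL[OF assms(1)] by blast
  define y where "y = - (e/2) *\<^sub>R axis k (1::real)"
  have "y \<in> f ` K"
  proof (rule LLe)
    show "dist y (f x) < e" using e by (simp add: y_def assms(2) norm_axis_1)
    show "\<forall>j. x$j = 0 \<longrightarrow> 0 \<le> y$j" using k by (auto simp: y_def axis_def)
    show "\<forall>j. x$j = 1 \<longrightarrow> y$j \<le> 1" using e by (auto simp: y_def axis_def)
  qed
  then have "y \<in> K" using step1 by blast
  then have "0 \<le> y$k" by (simp add: K_def)
  then show False using e by (simp add: y_def)
qed

lemma inj_Qo: "inj_on f Qo"
proof -
  have "\<forall>x\<in>K. \<exists>d>0. inj_on f (ball x d)" using loc_inj by blast
  then obtain \<delta> where \<delta>: "\<And>x. x \<in> K \<Longrightarrow> \<delta> x > 0 \<and> inj_on f (ball x (\<delta> x))" by metis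
  define U where "U = (\<Union>x\<in>K. ball x (\<delta> x) \<times> ball x (\<delta> x))"
  define E where "E = (K \<times> K) \<inter> {p. f (fst p) = f (snd p)}"
  define P2 where "P2 = {p. fst p \<in> K \<and> snd p \<in> K \<and> f (fst p) = f (snd p) \<and> fst p \<noteq> snd p}"
  have openU: "open U" unfolding U_def by (intro open_UN ballI open_Times open_ball)
  have "closed {p::(real^'n) \<times> (real^'n). f (fst p) = f (snd p)}"
  proof -
    have "continuous_on UNIV (\<lambda>p::(real^'n) \<times> (real^'n). f (fst p))"
      by (rule continuous_on_compose2[OF contf continuous_on_fst]) auto
    moreover have "continuous_on UNIV (\<lambda>p::(real^'n) \<times> (real^'n). f (snd p))"
      by (rule continuous_on_compose2[OF contf continuous_on_snd]) auto
    ultimately show ?thesis by (intro closed_Collect_eq) auto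
  qed
  then have compE: "compact E" unfolding E_def
    by (intro compact_Int_closed compact_Times compact_K)
  have P2eq: "P2 = E \<inter> - U"
  proof (intro equalityI subsetI)
    fix p assume p: "p \<in> P2"
    have "p \<notin> U"
    proof
      assume "p \<in> U"
      then obtain x where "x \<in> K" "fst p \<in> ball x (\<delta> x)" "snd p \<in> ball x (\<delta> x)"
        unfolding U_def by (auto simp: mem_Times_iff)
      then show False using p \<delta> unfolding P2_def inj_on_def by blast
    qed
    then show "p \<in> E \<inter> - U" using p unfolding P2_def E_def by (auto simp: mem_Times_iff)
  next
    fix p assume p: "p \<in> E \<inter> - U"
    have "fst p \<noteq> snd p"
    proof
      assume eq: "fst p = snd p"
      have "fst p \<in> K" using p unfolding E_def by (auto simp: mem_Times_iff)
      then have "p \<in> U" unfolding U_def using \<delta> eq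
        by (intro UN_I[of "fst p"]) (auto simp: mem_Times_iff)
      then show False using p by blast
    qed
    then show "p \<in> P2" using p unfolding P2_def E_def by (auto simp: mem_Times_iff)
  qed
  have compP2: "compact P2" unfolding P2eq
    using compE openU by (simp add: Diff_eq[symmetric] compact_diff)
  define M2 where "M2 = (\<lambda>p. f (fst p)) ` P2"
  have "compact M2" unfolding M2_def
    by (rule compact_continuous_image[OF continuous_on_compose2[OF contf continuous_on_fst] compP2]) auto
  then have closedM2: "closed M2" by (rule compact_imp_closed)
  have zero_notin: "0 \<notin> M2"
  proof
    assume "0 \<in> M2"
    then obtain p where p: "p \<in> P2" "f (fst p) = 0" unfolding M2_def by auto
    then have "fst p = 0" "snd p = 0" using step3 unfolding P2_def by auto
    then show False using p unfolding P2_def by auto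
  qed
  have openM2: "open (M2 \<inter> Qo)"
  proof (rule Topological_Spaces.openI)
    fix y assume yM: "y \<in> M2 \<inter> Qo"
    then obtain p where p: "p \<in> P2" "y = f (fst p)" unfolding M2_def by blast
    define a where "a = fst p"
    define b where "b = snd p"
    have ab: "a \<in> K" "b \<in> K" "f a = y" "f b = y" "a \<noteq> b" "y \<in> Qo"
      using p yM unfolding P2_def a_def b_def by auto
    have aQ: "a \<in> Qo" using bdry_out[OF ab(1)] ab(3,6) by blast
    have bQ: "b \<in> Qo" using bdry_out[OF ab(2)] ab(4,6) by blast
    obtain ra where ra: "ra > 0" "ball a ra \<subseteq> Qo" using open_Qo aQ open_contains_ball by blast
    obtain rb where rb: "rb > 0" "ball b rb \<subseteq> Qo" using open_Qo bQ open_contains_ball by blast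
    define r where "r = min (min ra rb) (min (dist a b / 2) (min (\<delta> a) (\<delta> b)))"
    have da: "\<delta> a > 0" "inj_on f (ball a (\<delta> a))" using \<delta>[OF ab(1)] by auto
    have db: "\<delta> b > 0" "inj_on f (ball b (\<delta> b))" using \<delta>[OF ab(2)] by auto
    have "dist a b > 0" using ab(5) by simp
    then have r: "r > 0" using ra(1) rb(1) da(1) db(1) unfolding r_def by linarith
    have "ball a r \<subseteq> ball a (\<delta> a)" by (rule subset_ball) (simp add: r_def)
    then have injA: "inj_on f (ball a r)" using da(2) by (rule inj_on_subset[rotated])
    have "ball b r \<subseteq> ball b (\<delta> b)" by (rule subset_ball) (simp add: r_def)
    then have injB: "inj_on f (ball b r)" using db(2) by (rule inj_on_subset[rotated])
    have oA: "open (f ` ball a r)" by (rule invariance_of_domain[OF contf open_ball injA])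
    have oB: "open (f ` ball b r)" by (rule invariance_of_domain[OF contf open_ball injB])
    have subA: "ball a r \<subseteq> K"
    proof -
      have "ball a r \<subseteq> ball a ra" by (rule subset_ball) (simp add: r_def)
      then show ?thesis using ra(2) Qo_K by blast
    qed
    have subB: "ball b r \<subseteq> K"
    proof -
      have "ball b r \<subseteq> ball b rb" by (rule subset_ball) (simp add: r_def)
      then show ?thesis using rb(2) Qo_K by blast
    qed
    have r2: "r + r \<le> dist a b" unfolding r_def by linarith
    define W where "W = f ` ball a r \<inter> f ` ball b r \<inter> Qo"
    have "open W" unfolding W_def using oA oB open_Qo by (intro open_Int)
    moreover have "y \<in> W"
    proof -
      have "a \<in> ball a r" "b \<in> ball b r" using r by auto
      then have "f a \<in> f ` ball a r" "f b \<in> f ` ball b r" by blast+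
      then show ?thesis unfolding W_def using ab by simp
    qed
    moreover have "W \<subseteq> M2 \<inter> Qo"
    proof
      fix y' assume "y' \<in> W"
      then obtain a' b' where a': "a' \<in> ball a r" "y' = f a'" and b': "b' \<in> ball b r" "y' = f b'"
        and y'Q: "y' \<in> Qo" unfolding W_def by blast
      have "a' \<noteq> b'"
      proof
        assume eq: "a' = b'"
        have "dist a b \<le> dist a a' + dist b a'" by (metis dist_commute dist_triangle)
        moreover have "dist a a' < r" "dist b a' < r" using a'(1) b'(1) eq by auto
        ultimately show False using r2 by linarith
      qed
      moreover have "a' \<in> K" "b' \<in> K" using a'(1) b'(1) subA subB by blast+
      ultimately have "(a', b') \<in> P2" unfolding P2_def using a'(2) b'(2) by simp
      then have "y' \<in> M2" unfolding M2_def using a'(2) by (intro image_eqI[of _ _ "(a', b')"]) simp_all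
      then show "y' \<in> M2 \<inter> Qo" using y'Q by blast
    qed
    ultimately show "\<exists>T. open T \<and> y \<in> T \<and> T \<subseteq> M2 \<inter> Qo" by blast
  qed
  have "M2 \<inter> Qo = {} \<or> M2 \<inter> Qo = Qo"
  proof -
    have "openin (top_of_set Qo) (M2 \<inter> Qo)"
      by (rule open_openin_trans[OF open_Qo openM2]) auto
    moreover have "closedin (top_of_set Qo) (M2 \<inter> Qo)"
      using closedin_closed_Int[OF closedM2, of Qo] by (simp add: Int_commute)
    ultimately show ?thesis using connected_Qo unfolding connected_clopen by blast
  qed
  moreover have "M2 \<inter> Qo \<noteq> Qo"
  proof
    assume "M2 \<inter> Qo = Qo"
    then have "Qo \<subseteq> M2" by blast
    then have "closure Qo \<subseteq> M2" using closedM2 closure_minimal by blast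
    then show False using zero_notin zero_K closure_Qo by blast
  qed
  ultimately have empty: "M2 \<inter> Qo = {}" by blast
  show ?thesis
  proof (rule inj_onI)
    fix a b assume ab: "a \<in> Qo" "b \<in> Qo" "f a = f b"
    show "a = b"
    proof (rule ccontr)
      assume "a \<noteq> b"
      then have "(a, b) \<in> P2" using ab Qo_K unfolding P2_def by auto
      then have "f a \<in> M2" unfolding M2_def by force
      moreover have "f a \<in> Qo" using step2 ab by blast
      ultimately show False using empty by blast
    qed
  qed
qed

lemma surj_Qo: "f ` Qo = Qo"
proof -
  have sub: "f ` Qo \<subseteq> Qo" using step2 by blast
  have "openin (top_of_set Qo) (f ` Qo)"
    by (rule open_openin_trans[OF open_Qo invariance_of_domain[OF contf open_Qo inj_Qo] sub])
  moreover have "f ` Qo = f ` K \<inter> Qo"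
  proof
    show "f ` Qo \<subseteq> f ` K \<inter> Qo" using sub Qo_K by blast
    show "f ` K \<inter> Qo \<subseteq> f ` Qo"
    proof
      fix y assume "y \<in> f ` K \<inter> Qo"
      then obtain x where "x \<in> K" "f x = y" "y \<in> Qo" by auto
      then have "x \<in> Qo" using bdry_out by blast
      then show "y \<in> f ` Qo" using \<open>f x = y\<close> by blast
    qed
  qed
  moreover have "closed (f ` K)" by (intro compact_imp_closed compact_continuous_image contf compact_K)
  moreover have "closedin (top_of_set Qo) (Qo \<inter> f ` K)"
    by (rule closedin_closed_Int) fact
  ultimately have "closedin (top_of_set Qo) (f ` Qo)" "openin (top_of_set Qo) (f ` Qo)"
    by (simp_all add: Int_commute)
  moreover have "f ` Qo \<noteq> {}" using Qo_ne by blast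
  ultimately show ?thesis using connected_Qo unfolding connected_clopen by blast
qed

lemma bij_Qo: "bij_betw f Qo Qo"
  using inj_Qo surj_Qo by (simp add: bij_betw_def)

end

lemma cont_det:
  fixes g :: "'a::topological_space \<Rightarrow> ((real^'n) \<Rightarrow>\<^sub>L (real^'n))"
  assumes "continuous_on S g"
  shows "continuous_on S (\<lambda>x. det (matrix (blinfun_apply (g x))))"
proof -
  have c: "continuous_on S (\<lambda>x. blinfun_apply (g x) (axis j 1) $ i)" for i j
    by (intro continuous_on_component bounded_linear.continuous_on[OF blinfun.bounded_linear_left assms])
  show ?thesis unfolding det_def matrix_def
    by (simp, intro continuous_intros c)
qed

lemma closure_unit_cube: "closure unit_cube = {x::real^'n. \<forall>i. 0 \<le> x$i \<and> x$i \<le> 1}"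
proof -
  have eq: "unit_cube = box (0::real^'n) (vec 1)" by (auto simp: unit_cube_def mem_box_cart)
  have ne: "box (0::real^'n) (vec 1) \<noteq> {}"
  proof -
    have "(\<chi> i. 1/2) \<in> box (0::real^'n) (vec 1)" by (simp add: mem_box_cart)
    then show ?thesis by blast
  qed
  have "closure unit_cube = cbox (0::real^'n) (vec 1)" unfolding eq by (rule closure_box[OF ne])
  then show ?thesis by (auto simp: mem_box_cart)
qed

lemma bounded_unit_cube: "bounded (unit_cube :: (real^'n) set)"
proof -
  have eq: "unit_cube = box (0::real^'n) (vec 1)" by (auto simp: unit_cube_def mem_box_cart)
  show ?thesis unfolding eq by (rule bounded_box)
qed

theorem proposition2:
  fixes M :: nat and \<phi> :: "nat \<Rightarrow> real^'n \<Rightarrow> real^'n"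
  assumes dim: "CARD('n) = 2 \<or> CARD('n) = 3"
    and C1: "\<And>m. m \<in> {1..M} \<Longrightarrow> C1_map (\<phi> m)"
    and bdry: "\<And>m i X. m \<in> {1..M} \<Longrightarrow> X $ i = 0 \<or> X $ i = 1 \<Longrightarrow> \<phi> m X \<bullet> axis i 1 = 0"
  shows "(\<forall>abar. (INF X\<in>closure unit_cube. det (jac (Psi_hf M \<phi> abar) X)) > 0
            \<longrightarrow> bij_betw (Psi_hf M \<phi> abar) unit_cube unit_cube)
       \<and> (\<forall>\<epsilon>. 0 < \<epsilon> \<and> \<epsilon> < 1 \<longrightarrow>
            (\<exists>r>0. (INF p\<in>unit_cube \<times> {a. coef_norm M a < r}. J_hf M \<phi> (snd p) (fst p)) \<ge> \<epsilon>))"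
proof -
  have "\<forall>m\<in>{1..M}. \<exists>g. (\<forall>x. (\<phi> m has_derivative blinfun_apply (g x)) (at x)) \<and> continuous_on UNIV g"
    using C1 unfolding C1_map_def by blast
  then obtain F where F: "\<And>m. m \<in> {1..M} \<Longrightarrow> (\<forall>x. (\<phi> m has_derivative blinfun_apply (F m x)) (at x)) \<and> continuous_on UNIV (F m)"
    by metis
  define P' where "P' a x = id_blinfun + (\<Sum>m\<in>{1..M}. a m *\<^sub>R F m x)" for a x
  have derP: "(Psi_hf M \<phi> a has_derivative blinfun_apply (P' a x)) (at x)" for a x
  proof -
    have "((\<lambda>X. X + (\<Sum>m\<in>{1..M}. a m *\<^sub>R \<phi> m X)) has_derivative
       (\<lambda>h. h + (\<Sum>m\<in>{1..M}. a m *\<^sub>R blinfun_apply (F m x) h))) (at x)"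
      using F by (intro derivative_eq_intros) auto
    moreover have "blinfun_apply (P' a x) = (\<lambda>h. h + (\<Sum>m\<in>{1..M}. a m *\<^sub>R blinfun_apply (F m x) h))"
      by (rule ext) (simp add: P'_def blinfun.add_left blinfun.sum_left blinfun.scaleR_left)
    ultimately show ?thesis by (simp add: Psi_hf_def[abs_def])
  qed
  have contP: "continuous_on UNIV (P' a)" for a
    unfolding P'_def using F by (intro continuous_intros) auto
  have jacP: "jac (Psi_hf M \<phi> a) x = matrix (blinfun_apply (P' a x))" for a x
    unfolding jac_def using frechet_derivative_at[OF derP] by simp
  have PsiB: "Psi_hf M \<phi> a x $ i = x $ i" if "x$i = 0 \<or> x$i = 1" for a x i
  proof -
    have "\<phi> m x $ i = 0" if "m \<in> {1..M}" for m
      using bdry[OF that \<open>x$i = 0 \<or> x$i = 1\<close>] by (simp add: inner_axis)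
    then show ?thesis by (simp add: Psi_hf_def)
  qed
  have cm: "cube_map (Psi_hf M \<phi> a) (P' a)" for a
    by unfold_locales (use derP contP PsiB in auto)
  have Kc: "closure unit_cube = {x::real^'n. \<forall>i. 0 \<le> x$i \<and> x$i \<le> 1}" by (rule closure_unit_cube)
  have bdU: "bounded (unit_cube :: (real^'n) set)" by (rule bounded_unit_cube)
  have cK: "compact (closure (unit_cube :: (real^'n) set))" using bdU by (simp add: compact_closure)
  have part1: "bij_betw (Psi_hf M \<phi> abar) unit_cube unit_cube"
    if pos: "(INF X\<in>closure unit_cube. det (jac (Psi_hf M \<phi> abar) X)) > 0" for abar
  proof -
    have cont: "continuous_on (closure unit_cube) (\<lambda>X. det (jac (Psi_hf M \<phi> abar) X))"
      unfolding jacP by (rule cont_det[OF continuous_on_subset[OF contP]]) simp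
    have "compact ((\<lambda>X. det (jac (Psi_hf M \<phi> abar) X)) ` closure unit_cube)"
      by (rule compact_continuous_image[OF cont cK])
    then have bdd: "bdd_below ((\<lambda>X. det (jac (Psi_hf M \<phi> abar) X)) ` closure unit_cube)"
      by (intro bounded_imp_bdd_below compact_imp_bounded)
    have nz: "det (matrix (blinfun_apply (P' abar x))) \<noteq> 0"
      if "x \<in> {x. \<forall>i. 0 \<le> x$i \<and> x$i \<le> 1}" for x
    proof -
      have "x \<in> closure unit_cube" using that Kc by simp
      then have "(INF X\<in>closure unit_cube. det (jac (Psi_hf M \<phi> abar) X)) \<le> det (jac (Psi_hf M \<phi> abar) x)"
        by (rule cINF_lower[OF bdd])
      then show ?thesis using pos jacP by auto
    qed
    interpret C: cube_map_nz "Psi_hf M \<phi> abar" "P' abar"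
      by (rule cube_map_nz.intro[OF cm]) (unfold_locales, rule nz)
    have "C.Qo = unit_cube" by (simp add: C.Qo_def unit_cube_def)
    then show ?thesis using C.bij_Qo by simp
  qed
  have part2: "\<exists>r>0. (INF p\<in>unit_cube \<times> {a. coef_norm M a < r}. J_hf M \<phi> (snd p) (fst p)) \<ge> \<epsilon>"
    if eps: "0 < \<epsilon>" "\<epsilon> < 1" for \<epsilon>
  proof -
    have "\<exists>B>0. \<forall>X\<in>closure unit_cube. norm (F m X) \<le> B" if "m \<in> {1..M}" for m
    proof -
      have "compact (F m ` closure unit_cube)"
        by (rule compact_continuous_image[OF continuous_on_subset[OF conjunct2[OF F[OF that]]] cK]) simp
      then have "bounded (F m ` closure unit_cube)" by (rule compact_imp_bounded)
      then obtain B where "B > 0" "\<And>y. y \<in> F m ` closure unit_cube \<Longrightarrow> norm y \<le> B"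
        unfolding bounded_pos by blast
      then show ?thesis by (intro exI[of _ B]) auto
    qed
    then have "\<forall>m\<in>{1..M}. \<exists>B. B > 0 \<and> (\<forall>X\<in>closure unit_cube. norm (F m X) \<le> B)" by blast
    then obtain B where BB: "\<forall>m\<in>{1..M}. B m > 0 \<and> (\<forall>X\<in>closure unit_cube. norm (F m X) \<le> B m)"
      by (rule bchoice[elim_format]) blast
    have B: "\<And>m X. m \<in> {1..M} \<Longrightarrow> X \<in> closure unit_cube \<Longrightarrow> norm (F m X) \<le> B m"
      "\<And>m. m \<in> {1..M} \<Longrightarrow> B m > 0" using BB by auto
    define C where "C = (\<Sum>m\<in>{1..M}. B m)"
    have C0: "C \<ge> 0" unfolding C_def using B(2) by (intro sum_nonneg) (auto simp: less_imp_le)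
    have contd: "continuous_on UNIV (\<lambda>L::(real^'n) \<Rightarrow>\<^sub>L (real^'n). det (matrix (blinfun_apply (id_blinfun + L))))"
      by (rule cont_det) (intro continuous_intros)
    have d0: "det (matrix (blinfun_apply (id_blinfun + (0::(real^'n) \<Rightarrow>\<^sub>L (real^'n))))) = 1"
    proof -
      have "matrix (blinfun_apply (id_blinfun + (0::(real^'n) \<Rightarrow>\<^sub>L (real^'n)))) = mat 1"
        using matrix_id_mat_1 by (simp add: id_def)
      then show ?thesis by simp
    qed
    obtain \<delta> where \<delta>: "\<delta> > 0" "\<And>L::(real^'n) \<Rightarrow>\<^sub>L (real^'n). dist L 0 < \<delta> \<Longrightarrow>
        dist (det (matrix (blinfun_apply (id_blinfun + L)))) 1 < 1 - \<epsilon>"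
    proof -
      define g where "g L = det (matrix (blinfun_apply (id_blinfun + (L::(real^'n) \<Rightarrow>\<^sub>L (real^'n)))))" for L
      have pe: "1 - \<epsilon> > 0" using eps by simp
      have "continuous_on UNIV g" unfolding g_def by (rule contd)
      then have "\<forall>x\<in>UNIV. \<forall>e>0. \<exists>d>0. \<forall>x'\<in>UNIV. dist x' x < d \<longrightarrow> dist (g x') (g x) < e"
        unfolding continuous_on_iff .
      then have "\<forall>e>0. \<exists>d>0. \<forall>x'\<in>UNIV. dist x' 0 < d \<longrightarrow> dist (g x') (g 0) < e"
        by (rule bspec) simp
      then have "\<exists>d>0. \<forall>x'\<in>UNIV. dist x' 0 < d \<longrightarrow> dist (g x') (g 0) < 1 - \<epsilon>"
        using pe by blast
      then obtain d where d: "d > 0" "\<And>x'. dist x' 0 < d \<Longrightarrow> dist (g x') (g 0) < 1 - \<epsilon>"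
        by blast
      have g0: "g 0 = 1" unfolding g_def by (rule d0)
      show ?thesis
      proof (rule that[OF d(1)])
        fix L :: "(real^'n) \<Rightarrow>\<^sub>L (real^'n)" assume "dist L 0 < d"
        then have "dist (g L) (g 0) < 1 - \<epsilon>" by (rule d(2))
        then show "dist (det (matrix (blinfun_apply (id_blinfun + L)))) 1 < 1 - \<epsilon>"
          unfolding g0 by (simp add: g_def)
      qed
    qed
    define r where "r = \<delta> / (C + 1)"
    have r: "r > 0" using \<delta> C0 by (simp add: r_def)
    have key: "J_hf M \<phi> a X \<ge> \<epsilon>" if X: "X \<in> unit_cube" and a: "coef_norm M a < r" for X a
    proof -
      define L where "L = (\<Sum>m\<in>{1..M}. a m *\<^sub>R F m X)"
      have XK: "X \<in> closure unit_cube" using X closure_subset by blast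
      have am: "\<bar>a m\<bar> \<le> coef_norm M a" if "m \<in> {1..M}" for m
      proof -
        have "(a m)^2 \<le> (\<Sum>m\<in>{1..M}. (a m)^2)"
          by (rule member_le_sum) (use that in auto)
        then have "sqrt ((a m)^2) \<le> coef_norm M a" unfolding coef_norm_def by (rule real_sqrt_le_mono)
        then show ?thesis by simp
      qed
      have "norm L \<le> (\<Sum>m\<in>{1..M}. norm (a m *\<^sub>R F m X))" unfolding L_def by (rule norm_sum)
      also have "\<dots> \<le> (\<Sum>m\<in>{1..M}. r * B m)"
      proof (rule sum_mono)
        fix m assume m: "m \<in> {1..M}"
        have "norm (a m *\<^sub>R F m X) = \<bar>a m\<bar> * norm (F m X)" by simp
        also have "\<dots> \<le> r * B m"
          using am[OF m] a B(1)[OF m XK] by (intro mult_mono) auto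
        finally show "norm (a m *\<^sub>R F m X) \<le> r * B m" .
      qed
      also have "\<dots> = r * C" unfolding C_def by (simp add: sum_distrib_left)
      also have "\<dots> < \<delta>" using \<delta>(1) C0 unfolding r_def by (simp add: field_simps)
      finally have "dist L 0 < \<delta>" by simp
      then have "dist (det (matrix (blinfun_apply (id_blinfun + L)))) 1 < 1 - \<epsilon>" by (rule \<delta>(2))
      moreover have "J_hf M \<phi> a X = det (matrix (blinfun_apply (id_blinfun + L)))"
        unfolding J_hf_def jacP P'_def L_def ..
      ultimately show ?thesis by (simp add: dist_real_def abs_less_iff)
    qed
    have ne: "(unit_cube :: (real^'n) set) \<times> {a. coef_norm M a < r} \<noteq> {}"
    proof -
      have h1: "((\<chi> i. 1/2) :: real^'n) \<in> unit_cube" by (simp add: unit_cube_def)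
      have h2: "coef_norm M (\<lambda>_. 0) = 0" by (simp add: coef_norm_def)
      have "((\<chi> i. 1/2) :: real^'n, (\<lambda>_. 0)) \<in> unit_cube \<times> {a. coef_norm M a < r}"
        by (rule SigmaI[OF h1]) (simp add: h2 r)
      then show ?thesis by blast
    qed
    have "\<epsilon> \<le> (INF p\<in>unit_cube \<times> {a. coef_norm M a < r}. J_hf M \<phi> (snd p) (fst p))"
    proof (rule cINF_greatest[OF ne])
      fix p :: "(real^'n) \<times> (nat \<Rightarrow> real)" assume "p \<in> unit_cube \<times> {a. coef_norm M a < r}"
      then have "fst p \<in> unit_cube" "coef_norm M (snd p) < r" by (auto simp: mem_Times_iff)
      then show "\<epsilon> \<le> J_hf M \<phi> (snd p) (fst p)" by (rule key)
    qed
    then show ?thesis using r by blast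
  qed
  show ?thesis
  proof (intro conjI allI impI)
    fix abar assume "(INF X\<in>closure unit_cube. det (jac (Psi_hf M \<phi> abar) X)) > 0"
    then show "bij_betw (Psi_hf M \<phi> abar) unit_cube unit_cube" by (rule part1)
  next
    fix \<epsilon> :: real assume "0 < \<epsilon> \<and> \<epsilon> < 1"
    then show "\<exists>r>0. (INF p\<in>unit_cube \<times> {a. coef_norm M a < r}. J_hf M \<phi> (snd p) (fst p)) \<ge> \<epsilon>"
      using part2 by blast
  qed
qed

end
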